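(* Let $Q$ be a right Leibniz algebra which is a weak algebra of quotients of its subalgebra $L$. (1) If $I$ is a nonzero ideal of $Q$, then $I\cap L$ is a nonzero ideal of $L$. (2) If $L$ is semiprime (respectively prime), then so is $Q$.
   Context: A right Leibniz algebra satisfies $[x,[y,z]]=[[x,y],z]-[[x,z],y]$. Ideals: subspaces $I$ with $[I,A]\subseteq I$, $[A,I]\subseteq I$ in the ambient algebra $A$. A Leibniz algebra is semiprime if $[I,I]\ne\{0\}$ for every nonzero ideal $I$, and prime if $[I,J]\neq\{0\}$ for all nonzero ideals $I,J$. $Q$ is a weak algebra of quotients of $L$ if for every $0\ne q\in Q$ there exists $x\in L$ with $0\ne[q,x]\in L$ or $y\in L$ with $0\ne[y,q]\in L$. *)

theory Defs
  imports Complex_Main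
begin

text \<open>A right Leibniz algebra over a field: a vector space (scalar multiplication
  sc) with a bilinear bracket br satisfying [x,[y,z]] = [[x,y],z] - [[x,z],y].
  The algebra Q is the whole carrier type.\<close>

definition right_leibniz_algebra ::
  "('k::field \<Rightarrow> 'v::ab_group_add \<Rightarrow> 'v) \<Rightarrow> ('v \<Rightarrow> 'v \<Rightarrow> 'v) \<Rightarrow> bool" where
  "right_leibniz_algebra sc br \<longleftrightarrow>
     vector_space sc \<and>
     (\<forall>x y z. br (x + y) z = br x z + br y z) \<and>
     (\<forall>x y z. br x (y + z) = br x y + br x z) \<and>
     (\<forall>a x y. br (sc a x) y = sc a (br x y)) \<and>
     (\<forall>a x y. br x (sc a y) = sc a (br x y)) \<and>
     (\<forall>x y z. br x (br y z) = br (br x y) z - br (br x z) y)"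

definition subalgebra ::
  "('k::field \<Rightarrow> 'v::ab_group_add \<Rightarrow> 'v) \<Rightarrow> ('v \<Rightarrow> 'v \<Rightarrow> 'v) \<Rightarrow> 'v set \<Rightarrow> bool" where
  "subalgebra sc br L \<longleftrightarrow> module.subspace sc L \<and> (\<forall>x\<in>L. \<forall>y\<in>L. br x y \<in> L)"

definition ideal_of ::
  "('k::field \<Rightarrow> 'v::ab_group_add \<Rightarrow> 'v) \<Rightarrow> ('v \<Rightarrow> 'v \<Rightarrow> 'v) \<Rightarrow> 'v set \<Rightarrow> 'v set \<Rightarrow> bool" where
  "ideal_of sc br A I \<longleftrightarrow> module.subspace sc I \<and> I \<subseteq> A \<and>
     (\<forall>x\<in>I. \<forall>a\<in>A. br x a \<in> I \<and> br a x \<in> I)"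

definition bracket_space ::
  "('k::field \<Rightarrow> 'v::ab_group_add \<Rightarrow> 'v) \<Rightarrow> ('v \<Rightarrow> 'v \<Rightarrow> 'v) \<Rightarrow> 'v set \<Rightarrow> 'v set \<Rightarrow> 'v set" where
  "bracket_space sc br I J = module.span sc {br x y | x y. x \<in> I \<and> y \<in> J}"

definition semiprime_alg ::
  "('k::field \<Rightarrow> 'v::ab_group_add \<Rightarrow> 'v) \<Rightarrow> ('v \<Rightarrow> 'v \<Rightarrow> 'v) \<Rightarrow> 'v set \<Rightarrow> bool" where
  "semiprime_alg sc br A \<longleftrightarrow>
     (\<forall>I. ideal_of sc br A I \<and> I \<noteq> {0} \<longrightarrow> bracket_space sc br I I \<noteq> {0})"

definition prime_alg ::
  "('k::field \<Rightarrow> 'v::ab_group_add \<Rightarrow> 'v) \<Rightarrow> ('v \<Rightarrow> 'v \<Rightarrow> 'v) \<Rightarrow> 'v set \<Rightarrow> bool" where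
  "prime_alg sc br A \<longleftrightarrow>
     (\<forall>I J. ideal_of sc br A I \<and> I \<noteq> {0} \<and> ideal_of sc br A J \<and> J \<noteq> {0}
        \<longrightarrow> bracket_space sc br I J \<noteq> {0})"

definition weak_algebra_of_quotients ::
  "('v::zero \<Rightarrow> 'v \<Rightarrow> 'v) \<Rightarrow> 'v set \<Rightarrow> bool" where
  "weak_algebra_of_quotients br L \<longleftrightarrow>
     (\<forall>q. q \<noteq> 0 \<longrightarrow> (\<exists>x\<in>L. br q x \<noteq> 0 \<and> br q x \<in> L) \<or> (\<exists>y\<in>L. br y q \<noteq> 0 \<and> br y q \<in> L))"

end

theory Submission
  imports Defs
begin

lemma bs_nonzero:
  assumes "vector_space sc"
  shows "bracket_space sc br I J \<noteq> {0} \<longleftrightarrow> (\<exists>x\<in>I. \<exists>y\<in>J. br x y \<noteq> 0)"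
proof -
  interpret vector_space sc by fact
  let ?S = "{br x y | x y. x \<in> I \<and> y \<in> J}"
  show ?thesis
  proof
    assume h: "bracket_space sc br I J \<noteq> {0}"
    show "\<exists>x\<in>I. \<exists>y\<in>J. br x y \<noteq> 0"
    proof (rule ccontr)
      assume "\<not> ?thesis"
      then have "?S \<subseteq> {0}" by auto
      then have "span ?S \<subseteq> span {0}" by (rule span_mono)
      then have "span ?S \<subseteq> {0}" by simp
      with span_zero[of ?S] have "span ?S = {0}" by auto
      with h show False unfolding bracket_space_def by simp
    qed
  next
    assume "\<exists>x\<in>I. \<exists>y\<in>J. br x y \<noteq> 0"
    then obtain x y where "x \<in> I" "y \<in> J" "br x y \<noteq> 0" by blast
    then have "br x y \<in> span ?S" by (intro span_base) blast
    with \<open>br x y \<noteq> 0\<close> show "bracket_space sc br I J \<noteq> {0}"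
      unfolding bracket_space_def by auto
  qed
qed

theorem proposition3p6:
  fixes sc :: "'k::field \<Rightarrow> 'v::ab_group_add \<Rightarrow> 'v"
    and br :: "'v \<Rightarrow> 'v \<Rightarrow> 'v"
    and L :: "'v set"
  assumes "right_leibniz_algebra sc br"
    and "subalgebra sc br L"
    and "weak_algebra_of_quotients br L"
  shows "(\<forall>I. ideal_of sc br UNIV I \<and> I \<noteq> {0} \<longrightarrow> ideal_of sc br L (I \<inter> L) \<and> I \<inter> L \<noteq> {0})
         \<and> (semiprime_alg sc br L \<longrightarrow> semiprime_alg sc br UNIV)
         \<and> (prime_alg sc br L \<longrightarrow> prime_alg sc br UNIV)"
proof -
  have vs: "vector_space sc" using assms(1) unfolding right_leibniz_algebra_def by blast
  interpret vector_space sc by (rule vs)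
  have subL: "subspace L" using assms(2) unfolding subalgebra_def by blast
  have P1: "ideal_of sc br L (I \<inter> L) \<and> I \<inter> L \<noteq> {0}"
    if I: "ideal_of sc br UNIV I" "I \<noteq> {0}" for I
  proof
    have sI: "subspace I" using I(1) unfolding ideal_of_def by blast
    show "ideal_of sc br L (I \<inter> L)"
      using I(1) subspace_inter[OF sI subL] assms(2)
      unfolding ideal_of_def subalgebra_def by blast
    have "0 \<in> I" using subspace_0[OF sI] .
    with I(2) obtain q where q: "q \<in> I" "q \<noteq> 0" by blast
    from assms(3) q(2) have "(\<exists>x\<in>L. br q x \<noteq> 0 \<and> br q x \<in> L) \<or> (\<exists>y\<in>L. br y q \<noteq> 0 \<and> br y q \<in> L)"
      unfolding weak_algebra_of_quotients_def by blast
    moreover have "br q x \<in> I" "br x q \<in> I" for x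
      using I(1) q(1) unfolding ideal_of_def by auto
    ultimately show "I \<inter> L \<noteq> {0}" by blast
  qed
  have key: "(\<exists>x\<in>I \<inter> L. \<exists>y\<in>J \<inter> L. br x y \<noteq> 0) \<Longrightarrow> (\<exists>x\<in>I. \<exists>y\<in>J. br x y \<noteq> 0)" for I J
    by blast
  show ?thesis
  proof (intro conjI)
    show "\<forall>I. ideal_of sc br UNIV I \<and> I \<noteq> {0} \<longrightarrow> ideal_of sc br L (I \<inter> L) \<and> I \<inter> L \<noteq> {0}"
      using P1 by blast
  next
    show "semiprime_alg sc br L \<longrightarrow> semiprime_alg sc br UNIV"
    proof
    assume sp: "semiprime_alg sc br L"
    show "semiprime_alg sc br UNIV"
      unfolding semiprime_alg_def
    proof (intro allI impI)
      fix I assume h: "ideal_of sc br UNIV I \<and> I \<noteq> {0}"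
      have "ideal_of sc br L (I \<inter> L) \<and> I \<inter> L \<noteq> {0}" using P1 h by blast
      then have "bracket_space sc br (I \<inter> L) (I \<inter> L) \<noteq> {0}"
        using sp unfolding semiprime_alg_def by (elim allE impE) auto
      then have "\<exists>x\<in>I \<inter> L. \<exists>y\<in>I \<inter> L. br x y \<noteq> 0" by (simp only: bs_nonzero[OF vs])
      then have "\<exists>x\<in>I. \<exists>y\<in>I. br x y \<noteq> 0" by blast
      then show "bracket_space sc br I I \<noteq> {0}" by (simp only: bs_nonzero[OF vs])
    qed
    qed
  next
    show "prime_alg sc br L \<longrightarrow> prime_alg sc br UNIV"
    proof
    assume sp: "prime_alg sc br L"
    show "prime_alg sc br UNIV"
      unfolding prime_alg_def
    proof (intro allI impI)
      fix I J assume h: "ideal_of sc br UNIV I \<and> I \<noteq> {0} \<and> ideal_of sc br UNIV J \<and> J \<noteq> {0}"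
      have "ideal_of sc br L (I \<inter> L) \<and> I \<inter> L \<noteq> {0}" using P1 h by blast
      moreover have "ideal_of sc br L (J \<inter> L) \<and> J \<inter> L \<noteq> {0}" using P1 h by blast
      ultimately have "bracket_space sc br (I \<inter> L) (J \<inter> L) \<noteq> {0}"
        using sp unfolding prime_alg_def by (elim allE impE) auto
      then have "\<exists>x\<in>I \<inter> L. \<exists>y\<in>J \<inter> L. br x y \<noteq> 0" by (simp only: bs_nonzero[OF vs])
      then have "\<exists>x\<in>I. \<exists>y\<in>J. br x y \<noteq> 0" by blast
      then show "bracket_space sc br I J \<noteq> {0}" by (simp only: bs_nonzero[OF vs])
    qed
    qed
  qed
qed

end
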